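(* Let $q'>0$, $e'\in(0,1)$, $q_{\max}>0$, $\mathcal D_5=\{(e,\omega):0\le e\le1,\ 0\le\omega\le\pi\}$, $\mathcal D_6=\{(q,\omega'):0<q\le q_{\max},\ 0\le\omega'\le\pi/2\}$. For each $(q,\omega')\in\mathcal D_6$, $$\min_{(e,\omega)\in\mathcal D_5}\delta_{\rm nod}=\max\{0,\ \ell^{\omega'}_{\rm ext}\},\qquad \max_{(e,\omega)\in\mathcal D_5}\delta_{\rm nod}=\max\{u^{\omega'}_{\rm link},\ u^{\omega'}_{\rm ext}\},$$ where $\ell^{\omega'}_{\rm ext}(q,\omega')=q-\frac{p'}{1-e'\cos\omega'}$, $u^{\omega'}_{\rm link}(q,\omega')=\frac{p'}{1-e'\cos\omega'}-q$, and $$u^{\omega'}_{\rm ext}(q,\omega')=\frac{2q}{1+\cos\omega_*}-\frac{p'}{1+e'\cos\omega'},\qquad \cos\omega_*=\frac{p'e'\cos\omega'}{\sqrt{q^2(1-e'^2\cos^2\omega')^2+(p'e'\cos\omega')^2}+q(1-e'^2\cos^2\omega')}.$$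
   Context: For $q>0$, $e\in[0,1]$ and angles $\omega,\omega'$, define $r_{\pm}=\frac{q(1+e)}{1\pm e\cos\omega}$, $r'_{\pm}=\frac{q'(1+e')}{1\pm e'\cos\omega'}$ (extended-real value $+\infty$ allowed when a denominator vanishes), $d^+=r'_+-r_+$, $d^-=r'_--r_-$, and the nodal distance $\delta_{\rm nod}=\min\{|d^+|,|d^-|\}$. $p'=q'(1+e')$. *)

theory Defs
  imports Complex_Main "HOL-Library.Extended_Real"
begin

definition r_plus :: "real \<Rightarrow> real \<Rightarrow> real \<Rightarrow> ereal" where
  "r_plus q e w = (if 1 + e * cos w = 0 then PInfty else ereal (q * (1 + e) / (1 + e * cos w)))"

definition r_minus :: "real \<Rightarrow> real \<Rightarrow> real \<Rightarrow> ereal" where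
  "r_minus q e w = (if 1 - e * cos w = 0 then PInfty else ereal (q * (1 + e) / (1 - e * cos w)))"

definition d_plus :: "real \<Rightarrow> real \<Rightarrow> real \<Rightarrow> real \<Rightarrow> real \<Rightarrow> real \<Rightarrow> ereal" where
  "d_plus q e w q' e' w' = r_plus q' e' w' - r_plus q e w"

definition d_minus :: "real \<Rightarrow> real \<Rightarrow> real \<Rightarrow> real \<Rightarrow> real \<Rightarrow> real \<Rightarrow> ereal" where
  "d_minus q e w q' e' w' = r_minus q' e' w' - r_minus q e w"

definition delta_nod :: "real \<Rightarrow> real \<Rightarrow> real \<Rightarrow> real \<Rightarrow> real \<Rightarrow> real \<Rightarrow> ereal" where
  "delta_nod q e w q' e' w' = min \<bar>d_plus q e w q' e' w'\<bar> \<bar>d_minus q e w q' e' w'\<bar>"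

definition l_ext :: "real \<Rightarrow> real \<Rightarrow> real \<Rightarrow> real \<Rightarrow> real" where
  "l_ext q' e' q w' = q - q' * (1 + e') / (1 - e' * cos w')"

definition u_link :: "real \<Rightarrow> real \<Rightarrow> real \<Rightarrow> real \<Rightarrow> real" where
  "u_link q' e' q w' = q' * (1 + e') / (1 - e' * cos w') - q"

definition cos_omega_star :: "real \<Rightarrow> real \<Rightarrow> real \<Rightarrow> real \<Rightarrow> real" where
  "cos_omega_star q' e' q w' =
     (let p' = q' * (1 + e'); c = cos w' in
      p' * e' * c / (sqrt (q\<^sup>2 * (1 - e'\<^sup>2 * c\<^sup>2)\<^sup>2 + (p' * e' * c)\<^sup>2) + q * (1 - e'\<^sup>2 * c\<^sup>2)))"

definition u_ext :: "real \<Rightarrow> real \<Rightarrow> real \<Rightarrow> real \<Rightarrow> real" where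
  "u_ext q' e' q w' = 2 * q / (1 + cos_omega_star q' e' q w') - q' * (1 + e') / (1 + e' * cos w')"

end

theory Submission
  imports Defs
begin

lemma lb_aux:
  fixes q e y a b :: real
  assumes "0 \<le> e" "0 < q" "a \<le> b" "0 \<le> y" "y \<le> 1 + e"
  shows "ereal (max 0 (q - b)) \<le> \<bar>ereal a - (if y = 0 then PInfty else ereal (q*(1+e)/y))\<bar>"
proof (cases "y = 0")
  case True then show ?thesis by simp
next
  case False
  then have y: "0 < y" using assms by simp
  have "q \<le> q*(1+e)/y" using y assms by (simp add: divide_simps mult_left_mono)
  then have "max 0 (q - b) \<le> \<bar>a - q*(1+e)/y\<bar>" using assms by linarith
  then show ?thesis using False by simp
qed

lemma ub_aux:
  fixes q e y a U :: real
  assumes "0 \<le> e" "0 < q" "0 < y" "y \<le> 1 + e" "q*(1+e)/y \<le> U"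
  shows "\<bar>ereal a - (if y = 0 then PInfty else ereal (q*(1+e)/y))\<bar> \<le> ereal (max (a - q) (U - a))"
proof -
  have "q \<le> q*(1+e)/y" using assms by (simp add: divide_simps mult_left_mono)
  then have "\<bar>a - q*(1+e)/y\<bar> \<le> max (a - q) (U - a)" using assms by linarith
  moreover have "\<bar>ereal a - (if y = 0 then PInfty else ereal (q*(1+e)/y))\<bar> = ereal \<bar>a - q*(1+e)/y\<bar>"
    using assms by simp
  ultimately show ?thesis by (metis ereal_less_eq(3))
qed

lemma rbound:
  fixes q e x s :: real
  assumes "0 \<le> e" "e \<le> 1" "0 < q" "x \<le> 1" "-1 < s" "s \<le> x" "0 < 1 + e*x"
  shows "q*(1+e)/(1+e*x) \<le> 2*q/(1+s)"
proof -
  have "0 \<le> (1-x)*(1-e)" using assms by simp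
  then have "(1+e)*(1+x) \<le> 2*(1+e*x)" by (simp add: algebra_simps)
  then have "q*((1+e)*(1+x)) \<le> q*(2*(1+e*x))" using assms by (simp add: mult_left_mono)
  then have "q*(1+e)/(1+e*x) \<le> 2*q/(1+x)" using assms by (simp add: divide_simps algebra_simps)
  also have "\<dots> \<le> 2*q/(1+s)" using assms by (simp add: divide_simps)
  finally show ?thesis .
qed

theorem proposition5:
  fixes q' e' q_max q w' :: real
  assumes "q' > 0" and "0 < e'" and "e' < 1" and "q_max > 0"
    and "0 < q" and "q \<le> q_max" and "0 \<le> w'" and "w' \<le> pi / 2"
  shows "ereal (max 0 (l_ext q' e' q w')) \<in> {delta_nod q e w q' e' w' | e w. 0 \<le> e \<and> e \<le> 1 \<and> 0 \<le> w \<and> w \<le> pi}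
       \<and> (\<forall>e w. 0 \<le> e \<and> e \<le> 1 \<and> 0 \<le> w \<and> w \<le> pi \<longrightarrow>
            ereal (max 0 (l_ext q' e' q w')) \<le> delta_nod q e w q' e' w')
       \<and> ereal (max (u_link q' e' q w') (u_ext q' e' q w')) \<in> {delta_nod q e w q' e' w' | e w. 0 \<le> e \<and> e \<le> 1 \<and> 0 \<le> w \<and> w \<le> pi}
       \<and> (\<forall>e w. 0 \<le> e \<and> e \<le> 1 \<and> 0 \<le> w \<and> w \<le> pi \<longrightarrow>
            delta_nod q e w q' e' w' \<le> ereal (max (u_link q' e' q w') (u_ext q' e' q w')))"
proof -
  define c where "c = cos w'"
  define A where "A = q'*(1+e')/(1+e'*c)"
  define B where "B = q'*(1+e')/(1-e'*c)"
  have c0: "0 \<le> c" unfolding c_def using assms by (intro cos_ge_zero) auto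
  have c1: "c \<le> 1" unfolding c_def by simp
  have ec0: "0 \<le> e'*c" using c0 assms by simp
  have ec1: "e'*c < 1" using c1 assms mult_left_le[of c e'] by linarith
  have Apos: "0 < A" unfolding A_def using assms ec0 by simp
  have AB: "A \<le> B" unfolding A_def B_def using assms ec0 ec1
    by (intro divide_left_mono mult_pos_pos) auto
  have rpA: "r_plus q' e' w' = ereal A" unfolding r_plus_def A_def c_def using ec0 c_def by auto
  have rmB: "r_minus q' e' w' = ereal B" unfolding r_minus_def B_def c_def using ec1 c_def by auto
  have dp: "d_plus q e w q' e' w' = ereal A - (if 1 + e*cos w = 0 then PInfty else ereal (q*(1+e)/(1+e*cos w)))" for e w
    unfolding d_plus_def rpA unfolding r_plus_def ..
  have dm: "d_minus q e w q' e' w' = ereal B - (if 1 - e*cos w = 0 then PInfty else ereal (q*(1+e)/(1-e*cos w)))" for e w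
    unfolding d_minus_def rmB unfolding r_minus_def ..
  have lext: "l_ext q' e' q w' = q - B" unfolding l_ext_def B_def c_def ..
  have ulink: "u_link q' e' q w' = B - q" unfolding u_link_def B_def c_def ..
  have den: "0 \<le> 1 + e*cos w" "1 + e*cos w \<le> 1 + e" "0 \<le> 1 - e*cos w" "1 - e*cos w \<le> 1 + e"
    if "0 \<le> e" "e \<le> 1" for e w :: real
  proof -
    have "\<bar>e*cos w\<bar> \<le> e" using that abs_cos_le_one[of w] by (simp add: abs_mult mult_left_le)
    then show "0 \<le> 1 + e*cos w" "1 + e*cos w \<le> 1 + e" "0 \<le> 1 - e*cos w" "1 - e*cos w \<le> 1 + e"
      using that by linarith+
  qed
  have P2: "\<forall>e w. 0 \<le> e \<and> e \<le> 1 \<and> 0 \<le> w \<and> w \<le> pi \<longrightarrow>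
            ereal (max 0 (l_ext q' e' q w')) \<le> delta_nod q e w q' e' w'"
  proof (intro allI impI)
    fix e w :: real assume h: "0 \<le> e \<and> e \<le> 1 \<and> 0 \<le> w \<and> w \<le> pi"
    have "ereal (max 0 (q - B)) \<le> \<bar>d_plus q e w q' e' w'\<bar>"
      unfolding dp using lb_aux[of e q A B "1 + e*cos w"] den[of e w] h AB assms by simp
    moreover have "ereal (max 0 (q - B)) \<le> \<bar>d_minus q e w q' e' w'\<bar>"
      unfolding dm using lb_aux[of e q B B "1 - e*cos w"] den[of e w] h AB assms by simp
    ultimately show "ereal (max 0 (l_ext q' e' q w')) \<le> delta_nod q e w q' e' w'"
      unfolding delta_nod_def lext by simp
  qed
  have P1: "ereal (max 0 (l_ext q' e' q w')) \<in> {delta_nod q e w q' e' w' | e w. 0 \<le> e \<and> e \<le> 1 \<and> 0 \<le> w \<and> w \<le> pi}"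
  proof (cases "B \<le> q")
    case True
    have "delta_nod q 0 0 q' e' w' = ereal (q - B)"
      unfolding delta_nod_def dp dm using True AB by (simp add: min_def)
    then show ?thesis unfolding lext using True by force
  next
    case False
    define w where "w = arccos (1 - 2*q/B)"
    have Bp: "0 < B" using Apos AB by simp
    have r1: "-1 \<le> 1 - 2*q/B" "1 - 2*q/B \<le> 1" using False Bp assms by (simp_all add: divide_simps)
    have cw: "cos w = 1 - 2*q/B" unfolding w_def using r1 by simp
    have w0: "0 \<le> w" "w \<le> pi" unfolding w_def using r1 arccos_bounded by auto
    have "1 - 1*cos w = 2*q/B" using cw by simp
    moreover have "2*q/B \<noteq> 0" using assms Bp by simp
    moreover have "q*(1+1)/(2*q/B) = B" using assms Bp by (simp add: divide_simps)
    ultimately have "d_minus q 1 w q' e' w' = 0" unfolding dm by (simp add: zero_ereal_def)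
    then have "delta_nod q 1 w q' e' w' = 0" unfolding delta_nod_def by (simp add: min_def antisym)
    moreover have "ereal (max 0 (l_ext q' e' q w')) = 0" unfolding lext using False by (simp add: zero_ereal_def)
    ultimately show ?thesis using w0 by force
  qed
  define K where "K = q'*(1+e')*e'*c"
  define D where "D = 1 - e'^2*c^2"
  define R where "R = sqrt (q^2*D^2 + K^2)"
  define s where "s = K/(R + q*D)"
  have K0: "0 \<le> K" unfolding K_def using assms c0 by simp
  have D_eq: "D = (1 - e'*c)*(1 + e'*c)" unfolding D_def by (simp add: algebra_simps power2_eq_square)
  have D0: "0 < D" unfolding D_eq using ec0 ec1 by simp
  have qD: "0 < q*D" using D0 assms by simp
  have R2: "R^2 = q^2*D^2 + K^2" unfolding R_def by simp
  have RqD: "q*D \<le> R" unfolding R_def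
    by (rule real_le_rsqrt) (simp add: power_mult_distrib)
  have RK: "K \<le> R" unfolding R_def
    by (rule real_le_rsqrt) (simp add: power_mult_distrib)
  have RqDp: "0 < R + q*D" using RqD qD by linarith
  have s0: "0 \<le> s" unfolding s_def using K0 RqDp by simp
  have s1: "s < 1" unfolding s_def using RK qD RqDp by (simp add: divide_simps)
  have ustar: "cos_omega_star q' e' q w' = s"
    unfolding cos_omega_star_def s_def K_def D_def R_def c_def Let_def ..
  have uext: "u_ext q' e' q w' = 2*q/(1+s) - A"
    unfolding u_ext_def ustar A_def c_def ..
  have sK: "s*(R + q*D) = K" unfolding s_def using RqDp by simp
  have KK: "K^2 = (R - q*D)*(R + q*D)" using R2 by (simp add: algebra_simps power2_eq_square)
  have sK2: "s*K = R - q*D"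
  proof -
    have "s*K*(R+q*D) = K*(s*(R+q*D))" by (simp add: algebra_simps)
    then have "s*K*(R+q*D) = K^2" using sK by (simp add: power2_eq_square)
    then have "s*K*(R+q*D) = (R - q*D)*(R+q*D)" using KK by simp
    then show ?thesis using RqDp by simp
  qed
  have key: "(R + q*D)*(1 - s^2) = 2*q*D"
  proof -
    have "s^2*(R+q*D) = s*(s*(R+q*D))" by (simp add: power2_eq_square algebra_simps)
    then have "s^2*(R+q*D) = s*K" using sK by simp
    then show ?thesis using sK2 by (simp add: algebra_simps)
  qed
  have BA: "B - A = 2*K/D"
    unfolding A_def B_def K_def D_eq using ec0 ec1 by (simp add: divide_simps) (simp add: algebra_simps)
  have ss: "2*q/(1-s) - 2*q/(1+s) = 2*K/D"
  proof -
    have ssl: "s*s < 1" using s0 s1 mult_left_le_one_le[of s s] by linarith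
    have "2*q/(1-s) - 2*q/(1+s) = 4*q*s/(1 - s^2)" using s0 s1 ssl
      by (simp add: divide_simps power2_eq_square) (simp add: algebra_simps)
    also have "\<dots> = 4*q*s*(R+q*D)/((1-s^2)*(R+q*D))" using RqDp by simp
    also have "\<dots> = 4*q*s*(R+q*D)/(2*q*D)" using key by (simp add: mult.commute)
    also have "\<dots> = 2*K/D" using sK D0 assms by (simp add: divide_simps)
    finally show ?thesis .
  qed
  have uext2: "u_ext q' e' q w' = 2*q/(1-s) - B" using uext ss BA by simp
  have uge: "2*q - B \<le> u_ext q' e' q w'"
  proof -
    have "2*q*(1-s) \<le> 2*q" using s0 assms by (simp add: algebra_simps)
    then have "2*q \<le> 2*q/(1-s)" using s1 by (simp add: le_divide_eq)
    then show ?thesis unfolding uext2 by linarith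
  qed
  have P4: "\<forall>e w. 0 \<le> e \<and> e \<le> 1 \<and> 0 \<le> w \<and> w \<le> pi \<longrightarrow>
            delta_nod q e w q' e' w' \<le> ereal (max (u_link q' e' q w') (u_ext q' e' q w'))"
  proof (intro allI impI)
    fix e w :: real assume h: "0 \<le> e \<and> e \<le> 1 \<and> 0 \<le> w \<and> w \<le> pi"
    have x1: "cos w \<le> 1" "-1 \<le> cos w" by simp_all
    show "delta_nod q e w q' e' w' \<le> ereal (max (u_link q' e' q w') (u_ext q' e' q w'))"
    proof (cases "s \<le> cos w")
      case True
      have y: "0 < 1 + e*cos w" using True s0 h by (smt (verit) mult_nonneg_nonneg)
      have "q*(1+e)/(1+e*cos w) \<le> 2*q/(1+s)"
        using rbound[of e q "cos w" s] h assms x1 True s0 y by simp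
      then have "\<bar>d_plus q e w q' e' w'\<bar> \<le> ereal (max (A - q) (2*q/(1+s) - A))"
        unfolding dp using ub_aux[of e q "1 + e*cos w" "2*q/(1+s)" A] h assms y den[of e w] by simp
      also have "\<dots> \<le> ereal (max (u_link q' e' q w') (u_ext q' e' q w'))"
        unfolding ulink uext using AB by (auto simp: max_def)
      finally show ?thesis unfolding delta_nod_def by (simp add: min_le_iff_disj)
    next
      case False
      have y: "0 < 1 - e*cos w"
      proof (cases "cos w \<le> 0")
        case True then show ?thesis using h by (smt (verit) mult_nonneg_nonpos)
      next
        case c: False
        have "e*cos w \<le> cos w" using h c mult_left_le_one_le[of "cos w" e] by simp
        then show ?thesis using False s1 by linarith
      qed
      have "q*(1+e)/(1+e*(-cos w)) \<le> 2*q/(1+(-s))"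
        using rbound[of e q "-cos w" "-s"] h assms x1 False s1 y by simp
      then have b: "q*(1+e)/(1-e*cos w) \<le> 2*q/(1-s)" by simp
      have "\<bar>d_minus q e w q' e' w'\<bar> \<le> ereal (max (B - q) (2*q/(1-s) - B))"
        unfolding dm using ub_aux[of e q "1 - e*cos w" "2*q/(1-s)" B] h assms y den[of e w] b by simp
      also have "\<dots> \<le> ereal (max (u_link q' e' q w') (u_ext q' e' q w'))"
        unfolding ulink uext2 by simp
      finally show ?thesis unfolding delta_nod_def by (simp add: min_le_iff_disj)
    qed
  qed
  have P3: "ereal (max (u_link q' e' q w') (u_ext q' e' q w')) \<in> {delta_nod q e w q' e' w' | e w. 0 \<le> e \<and> e \<le> 1 \<and> 0 \<le> w \<and> w \<le> pi}"
  proof (cases "u_ext q' e' q w' \<le> B - q")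
    case True
    have Bq: "q \<le> B" using True uge assms by linarith
    have "delta_nod q 1 pi q' e' w' = ereal (B - q)"
      unfolding delta_nod_def dp dm using Bq by simp
    moreover have "max (B - q) (u_ext q' e' q w') = B - q" using True by simp
    ultimately show ?thesis unfolding ulink
      by (intro CollectI exI[of _ 1] exI[of _ pi]) simp
  next
    case False
    define w where "w = arccos s"
    have cw: "cos w = s" unfolding w_def using s0 s1 by simp
    have w0: "0 \<le> w" "w \<le> pi" unfolding w_def using s0 s1 arccos_bounded by auto
    have u0: "0 \<le> u_ext q' e' q w'" using False uge assms by linarith
    have "d_plus q 1 w q' e' w' = ereal (- u_ext q' e' q w')"
      unfolding dp uext cw using s0 by simp
    moreover have "d_minus q 1 w q' e' w' = ereal (- u_ext q' e' q w')"
      unfolding dm uext2 cw using s1 by simp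
    ultimately have "delta_nod q 1 w q' e' w' = ereal (u_ext q' e' q w')"
      unfolding delta_nod_def using u0 by simp
    moreover have "max (B - q) (u_ext q' e' q w') = u_ext q' e' q w'" using False by simp
    ultimately show ?thesis using w0 unfolding ulink
      by (intro CollectI exI[of _ 1] exI[of _ w]) simp
  qed
  show ?thesis using P1 P2 P3 P4 by blast
qed

end
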